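(* Equip $S^1\times D^3$ (coordinates $\theta\in\mathbb{R}/2\pi\mathbb{Z}$, $x=(x_1,x_2,x_3)\in D^3$) with the product of the standard metric on $S^1$ and the flat metric on $D^3$, and write $\alpha_1=d\theta\, dx_1+dx_2\, dx_3$, $\alpha_2=d\theta\, dx_2+dx_3\, dx_1$, $\alpha_3=d\theta\, dx_3+dx_1\, dx_2$. Then there exist self-dual harmonic 2-forms for this metric, vanishing exactly along $S^1\times\{0\}$ with nondegenerate linear part, realizing both types of splittings. Namely: (A) $\omega_A=x_1\alpha_1+x_2\alpha_2-2x_3\alpha_3=*_3\mu+d\theta\wedge\mu$, where $\mu=d\big(\tfrac12(x_1^2+x_2^2)-x_3^2\big)$ and $*_3$ is the Hodge star of the flat metric on $D^3$, is a self-dual harmonic 2-form with $(L_{ij}(\theta))=\mathrm{diag}(1,1,-2)$, whose splitting is the oriented one; (B) for any $0<R<1$, $$\omega_B=(x_1\cos\theta+x_2\sin\theta)e^{x_3}\alpha_1+(x_1\sin\theta-x_2\cos\theta)e^{x_3}\alpha_2+R(-x_1\alpha_1+x_3\alpha_3)$$ is a self-dual harmonic 2-form with $$(L_{ij}(\theta))=\begin{pmatrix}\cos\theta-R&\sin\theta&0\\ \sin\theta&-\cos\theta&0\\ 0&0&R\end{pmatrix},$$ whose splitting is the unoriented one.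
   Context: For a 2-form $\omega=\sum_{i}L_i(\theta,x)\alpha_i+Q$ vanishing on $S^1\times\{0\}$, with $L_i=\sum_j L_{ij}(\theta)x_j$ and $Q$ of order at least two in $x$, the matrix $(L_{ij}(\theta))$ is (for closed $\omega$) symmetric and traceless; when it is nondegenerate, two of its eigenvalues have one sign and the third has the opposite sign for all $\theta$. The associated splitting of $\mathbb{R}^3\times S^1\to S^1$ is into the line bundle spanned by the eigenvector of the eigenvalue of the sign occurring once, and the rank 2 bundle spanned by the other two eigenvectors. The splitting is called oriented if this line bundle is orientable (trivial) and unoriented otherwise. *)

theory Defs
  imports "HOL-Analysis.Analysis"
begin

text \<open>A point is (theta, x1, x2, x3); theta ranges over the reals and forms are
  required to be 2 pi periodic in theta (so they live on S^1 = R / 2 pi Z).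
  Coordinate indices: 0 = theta, 1,2,3 = x1,x2,x3.\<close>

type_synonym pt = "real \<times> real \<times> real \<times> real"

fun coord :: "nat \<Rightarrow> pt \<Rightarrow> real" where
  "coord k (a, b, c, d) = (if k = 0 then a else if k = 1 then b else if k = 2 then c else d)"

fun setc :: "nat \<Rightarrow> real \<Rightarrow> pt \<Rightarrow> pt" where
  "setc k t (a, b, c, d) =
     (if k = 0 then (t, b, c, d) else if k = 1 then (a, t, c, d)
      else if k = 2 then (a, b, t, d) else (a, b, c, t))"

definition pd :: "nat \<Rightarrow> (pt \<Rightarrow> real) \<Rightarrow> pt \<Rightarrow> real" where
  "pd k f p = deriv (\<lambda>t. f (setc k t p)) (coord k p)"

definition S1D3 :: "pt set" where
  "S1D3 = {p. (coord 1 p)\<^sup>2 + (coord 2 p)\<^sup>2 + (coord 3 p)\<^sup>2 \<le> 1}"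

text \<open>A 2-form is given by its coefficients: w p i j is the coefficient of
  dx_i \<and> dx_j for i < j < 4 (with x_0 = theta); other entries are 0.\<close>
type_synonym form2 = "pt \<Rightarrow> nat \<Rightarrow> nat \<Rightarrow> real"

definition mk2 :: "(pt \<Rightarrow> real) \<Rightarrow> (pt \<Rightarrow> real) \<Rightarrow> (pt \<Rightarrow> real) \<Rightarrow>
                   (pt \<Rightarrow> real) \<Rightarrow> (pt \<Rightarrow> real) \<Rightarrow> (pt \<Rightarrow> real) \<Rightarrow> form2" where
  "mk2 c01 c02 c03 c12 c13 c23 = (\<lambda>p i j.
     if (i, j) = (0, 1) then c01 p else if (i, j) = (0, 2) then c02 p
     else if (i, j) = (0, 3) then c03 p else if (i, j) = (1, 2) then c12 p
     else if (i, j) = (1, 3) then c13 p else if (i, j) = (2, 3) then c23 p else 0)"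

definition fadd :: "form2 \<Rightarrow> form2 \<Rightarrow> form2" where
  "fadd v w = (\<lambda>p i j. v p i j + w p i j)"

definition fmul :: "(pt \<Rightarrow> real) \<Rightarrow> form2 \<Rightarrow> form2" where
  "fmul f w = (\<lambda>p i j. f p * w p i j)"

text \<open>alpha_1 = dtheta dx1 + dx2 dx3, alpha_2 = dtheta dx2 + dx3 dx1,
  alpha_3 = dtheta dx3 + dx1 dx2  (note dx3 dx1 = - dx1 dx3).\<close>
definition alpha :: "nat \<Rightarrow> form2" where
  "alpha k = (if k = 1 then mk2 (\<lambda>_. 1) (\<lambda>_. 0) (\<lambda>_. 0) (\<lambda>_. 0) (\<lambda>_. 0) (\<lambda>_. 1)
              else if k = 2 then mk2 (\<lambda>_. 0) (\<lambda>_. 1) (\<lambda>_. 0) (\<lambda>_. 0) (\<lambda>_. -1) (\<lambda>_. 0)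
              else if k = 3 then mk2 (\<lambda>_. 0) (\<lambda>_. 0) (\<lambda>_. 1) (\<lambda>_. 1) (\<lambda>_. 0) (\<lambda>_. 0)
              else (\<lambda>_ _ _. 0))"

text \<open>Hodge star of the product (flat) metric, orientation dtheta dx1 dx2 dx3.\<close>
definition hodge :: "form2 \<Rightarrow> form2" where
  "hodge w = mk2 (\<lambda>p. w p 2 3) (\<lambda>p. - w p 1 3) (\<lambda>p. w p 1 2)
                 (\<lambda>p. w p 0 3) (\<lambda>p. - w p 0 2) (\<lambda>p. w p 0 1)"

definition self_dual :: "form2 \<Rightarrow> bool" where
  "self_dual w \<longleftrightarrow> hodge w = w"

text \<open>Coefficient of dx_i dx_j dx_k (i<j<k) of the exterior derivative.\<close>
definition dcoef :: "form2 \<Rightarrow> pt \<Rightarrow> nat \<Rightarrow> nat \<Rightarrow> nat \<Rightarrow> real" where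
  "dcoef w p i j k = pd i (\<lambda>q. w q j k) p - pd j (\<lambda>q. w q i k) p + pd k (\<lambda>q. w q i j) p"

definition closed_on :: "pt set \<Rightarrow> form2 \<Rightarrow> bool" where
  "closed_on S w \<longleftrightarrow> (\<forall>p\<in>S. \<forall>i j k. i < j \<and> j < k \<and> k < 4 \<longrightarrow> dcoef w p i j k = 0)"

definition diff_on :: "pt set \<Rightarrow> form2 \<Rightarrow> bool" where
  "diff_on S w \<longleftrightarrow> (\<forall>p\<in>S. \<forall>i j. (\<lambda>q. w q i j) differentiable (at p))"

definition periodic_form :: "form2 \<Rightarrow> bool" where
  "periodic_form w \<longleftrightarrow> (\<forall>t a b c i j. w (t + 2 * pi, a, b, c) i j = w (t, a, b, c) i j)"

definition harmonic_on :: "pt set \<Rightarrow> form2 \<Rightarrow> bool" where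
  "harmonic_on S w \<longleftrightarrow> diff_on S w \<and> diff_on S (hodge w) \<and> closed_on S w \<and> closed_on S (hodge w)"

definition sd_harmonic :: "form2 \<Rightarrow> bool" where
  "sd_harmonic w \<longleftrightarrow> periodic_form w \<and> self_dual w \<and> harmonic_on S1D3 w"

definition vanishes_exactly_on_core :: "form2 \<Rightarrow> bool" where
  "vanishes_exactly_on_core w \<longleftrightarrow>
     (\<forall>p\<in>S1D3. (\<forall>i j. w p i j = 0) \<longleftrightarrow> (coord 1 p = 0 \<and> coord 2 p = 0 \<and> coord 3 p = 0))"

text \<open>For self-dual w = sum_i L_i alpha_i + Q, the coefficient of alpha_i is w_{0i};
  L_ij(theta) is its x_j derivative along S^1 x {0}.\<close>
definition Lc :: "form2 \<Rightarrow> real \<Rightarrow> nat \<Rightarrow> nat \<Rightarrow> real" where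
  "Lc w t i j = pd j (\<lambda>q. w q 0 i) (t, 0, 0, 0)"

definition Lmat :: "form2 \<Rightarrow> real \<Rightarrow> real^3^3" where
  "Lmat w t = vector [vector [Lc w t 1 1, Lc w t 1 2, Lc w t 1 3],
                      vector [Lc w t 2 1, Lc w t 2 2, Lc w t 2 3],
                      vector [Lc w t 3 1, Lc w t 3 2, Lc w t 3 3]]"

definition nondegenerate :: "form2 \<Rightarrow> bool" where
  "nondegenerate w \<longleftrightarrow> (\<forall>t. det (Lmat w t) \<noteq> 0)"

definition pos_space :: "real^3^3 \<Rightarrow> (real^3) set" where
  "pos_space M = span {v. \<exists>l>0. M *v v = l *\<^sub>R v}"

definition neg_space :: "real^3^3 \<Rightarrow> (real^3) set" where
  "neg_space M = span {v. \<exists>l<0. M *v v = l *\<^sub>R v}"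

definition once_line :: "real^3^3 \<Rightarrow> (real^3) set" where
  "once_line M = (if dim (pos_space M) = 1 then pos_space M else neg_space M)"

text \<open>The splitting is oriented iff the line bundle over S^1 is trivial, i.e. has a
  continuous nowhere-vanishing 2 pi periodic section.\<close>
definition oriented_splitting :: "form2 \<Rightarrow> bool" where
  "oriented_splitting w \<longleftrightarrow>
     (\<exists>v :: real \<Rightarrow> real^3. continuous_on UNIV v \<and>
        (\<forall>t. v (t + 2 * pi) = v t) \<and>
        (\<forall>t. v t \<noteq> 0 \<and> v t \<in> once_line (Lmat w t)))"

abbreviation x1 :: "pt \<Rightarrow> real" where "x1 \<equiv> coord 1"
abbreviation x2 :: "pt \<Rightarrow> real" where "x2 \<equiv> coord 2"
abbreviation x3 :: "pt \<Rightarrow> real" where "x3 \<equiv> coord 3"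
abbreviation th :: "pt \<Rightarrow> real" where "th \<equiv> coord 0"

definition omegaA :: form2 where
  "omegaA = fadd (fmul x1 (alpha 1)) (fadd (fmul x2 (alpha 2)) (fmul (\<lambda>p. - 2 * x3 p) (alpha 3)))"

text \<open>mu = d h as a 1-form on D^3 (coefficients of dx1, dx2, dx3), *_3 of a 1-form,
  and dtheta wedge a 1-form.\<close>
definition d3 :: "(pt \<Rightarrow> real) \<Rightarrow> nat \<Rightarrow> pt \<Rightarrow> real" where
  "d3 h k p = pd k h p"

definition star3 :: "(nat \<Rightarrow> pt \<Rightarrow> real) \<Rightarrow> form2" where
  "star3 m = mk2 (\<lambda>_. 0) (\<lambda>_. 0) (\<lambda>_. 0) (m 3) (\<lambda>p. - m 2 p) (m 1)"

definition dtheta_wedge :: "(nat \<Rightarrow> pt \<Rightarrow> real) \<Rightarrow> form2" where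
  "dtheta_wedge m = mk2 (m 1) (m 2) (m 3) (\<lambda>_. 0) (\<lambda>_. 0) (\<lambda>_. 0)"

definition muA :: "nat \<Rightarrow> pt \<Rightarrow> real" where
  "muA = d3 (\<lambda>p. (1/2) * ((x1 p)\<^sup>2 + (x2 p)\<^sup>2) - (x3 p)\<^sup>2)"

definition omegaB :: "real \<Rightarrow> form2" where
  "omegaB R = fadd (fmul (\<lambda>p. (x1 p * cos (th p) + x2 p * sin (th p)) * exp (x3 p)) (alpha 1))
             (fadd (fmul (\<lambda>p. (x1 p * sin (th p) - x2 p * cos (th p)) * exp (x3 p)) (alpha 2))
                   (fmul (\<lambda>_. R) (fadd (fmul (\<lambda>p. - x1 p) (alpha 1)) (fmul x3 (alpha 3)))))"

end

theory Submission
  imports Defs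
begin


lemma coord_simps[simp]: "coord 0 (a,b,c,d) = a" "coord 1 (a,b,c,d) = b" "coord 2 (a,b,c,d) = c" "coord 3 (a,b,c,d) = d"
  by auto

lemma pd0: "pd 0 f (a,b,c,d) = deriv (\<lambda>t. f (t,b,c,d)) a" by (simp add: pd_def)
lemma pd1: "pd 1 f (a,b,c,d) = deriv (\<lambda>t. f (a,t,c,d)) b" by (simp add: pd_def)
lemma pd2: "pd 2 f (a,b,c,d) = deriv (\<lambda>t. f (a,b,t,d)) c" by (simp add: pd_def)
lemma pd3: "pd 3 f (a,b,c,d) = deriv (\<lambda>t. f (a,b,c,t)) d" by (simp add: pd_def)

definition fA :: "real \<Rightarrow> pt \<Rightarrow> real" where
  "fA R p = (x1 p * cos (th p) + x2 p * sin (th p)) * exp (x3 p) - R * x1 p"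
definition fB :: "pt \<Rightarrow> real" where
  "fB p = (x1 p * sin (th p) - x2 p * cos (th p)) * exp (x3 p)"

definition gA :: "pt \<Rightarrow> real" where "gA p = -2 * x3 p"
definition nx2 :: "pt \<Rightarrow> real" where "nx2 p = - x2 p"
definition gR :: "real \<Rightarrow> pt \<Rightarrow> real" where "gR R p = R * x3 p"
definition nfB :: "pt \<Rightarrow> real" where "nfB p = - fB p"

lemma omegaA_eq: "omegaA = mk2 x1 x2 gA gA nx2 x1"
  by (auto simp: fun_eq_iff omegaA_def fadd_def fmul_def alpha_def mk2_def gA_def nx2_def)

lemma omegaB_eq: "omegaB R = mk2 (fA R) fB (gR R) (gR R) nfB (fA R)"
  by (auto simp: fun_eq_iff omegaB_def fadd_def fmul_def alpha_def mk2_def fA_def fB_def gR_def nfB_def)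

lemma hodge_mk2: "hodge (mk2 a b c d e f) = mk2 f (\<lambda>p. - e p) d c (\<lambda>p. - b p) a"
  by (auto simp: fun_eq_iff hodge_def mk2_def)

lemma mk2_fun: "(\<lambda>q. mk2 a b c d e f q i j) = (if (i,j)=(0,1) then a else if (i,j)=(0,2) then b
  else if (i,j)=(0,3) then c else if (i,j)=(1,2) then d else if (i,j)=(1,3) then e else if (i,j)=(2,3) then f else (\<lambda>_. 0))"
  unfolding mk2_def by (rule ext) (simp only: if_distrib[where f="\<lambda>g. g x" for x])

lemma mk2_cases: "(\<lambda>q. mk2 a b c d e f q i j) \<in> {a,b,c,d,e,f,\<lambda>_. 0}"
  unfolding mk2_fun by simp

lemma dcoef_mk2:
  "dcoef (mk2 a b c d e f) p 0 1 2 = pd 0 d p - pd 1 b p + pd 2 a p"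
  "dcoef (mk2 a b c d e f) p 0 1 3 = pd 0 e p - pd 1 c p + pd 3 a p"
  "dcoef (mk2 a b c d e f) p 0 2 3 = pd 0 f p - pd 2 c p + pd 3 b p"
  "dcoef (mk2 a b c d e f) p 1 2 3 = pd 1 f p - pd 2 e p + pd 3 d p"
  by (simp_all add: dcoef_def mk2_def)

lemma triples: "i < j \<and> j < k \<and> k < (4::nat) \<Longrightarrow> (i,j,k) \<in> {(0,1,2),(0,1,3),(0,2,3),(1,2,3)}"
  by auto

lemma closed_mk2: "(\<forall>p\<in>S. dcoef (mk2 a b c d e f) p 0 1 2 = 0 \<and> dcoef (mk2 a b c d e f) p 0 1 3 = 0
   \<and> dcoef (mk2 a b c d e f) p 0 2 3 = 0 \<and> dcoef (mk2 a b c d e f) p 1 2 3 = 0) \<Longrightarrow> closed_on S (mk2 a b c d e f)"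
  unfolding closed_on_def using triples by fastforce

lemma diff_mk2: "(\<forall>p\<in>S. a differentiable at p \<and> b differentiable at p \<and> c differentiable at p \<and>
   d differentiable at p \<and> e differentiable at p \<and> f differentiable at p) \<Longrightarrow> diff_on S (mk2 a b c d e f)"
  unfolding diff_on_def mk2_fun by auto

lemma coord_fun: "coord 0 = fst" "coord 1 = (\<lambda>p. fst (snd p))" "coord 2 = (\<lambda>p. fst (snd (snd p)))" "coord 3 = (\<lambda>p. snd (snd (snd p)))"
  by (auto simp: fun_eq_iff)

lemma coord_gen: "coord k = (if k = 0 then fst else if k = 1 then (\<lambda>p. fst (snd p)) else if k = 2 then (\<lambda>p. fst (snd (snd p))) else (\<lambda>p. snd (snd (snd p))))"
  by (auto simp: fun_eq_iff)

lemma dcoord: "coord k differentiable at p"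
proof -
  have "bounded_linear (coord k)"
    unfolding coord_gen
    by (simp add: bounded_linear_fst bounded_linear_snd
       bounded_linear_compose[OF bounded_linear_fst] bounded_linear_compose[OF bounded_linear_snd])
  then show ?thesis by (rule bounded_linear_imp_differentiable)
qed

lemma dsin: "(\<lambda>p. sin (coord k p)) differentiable at p"
proof -
  have "sin differentiable at x" for x :: real
    unfolding differentiable_def using DERIV_sin[unfolded has_field_derivative_def] by blast
  then show ?thesis by (intro differentiable_compose[OF _ dcoord])
qed
lemma dcos: "(\<lambda>p. cos (coord k p)) differentiable at p"
proof -
  have "cos differentiable at x" for x :: real
    unfolding differentiable_def using DERIV_cos[unfolded has_field_derivative_def] by blast
  then show ?thesis by (intro differentiable_compose[OF _ dcoord])
qed
lemma dexp: "(\<lambda>p. exp (coord k p)) differentiable at p"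
proof -
  have "exp differentiable at x" for x :: real
    unfolding differentiable_def using DERIV_exp[unfolded has_field_derivative_def] by blast
  then show ?thesis by (intro differentiable_compose[OF _ dcoord])
qed

lemma diff_fA: "fA R differentiable at p"
  unfolding fA_def by (intro differentiable_diff differentiable_mult differentiable_add dcoord dsin dcos dexp differentiable_const)
lemma diff_fB: "fB differentiable at p"
  unfolding fB_def by (intro differentiable_diff differentiable_mult differentiable_add dcoord dsin dcos dexp differentiable_const)



lemma pd_lin: "pd k (\<lambda>p. r * coord j p) p = (if k = j \<or> (k \<ge> 3 \<and> j \<ge> 3) then r else 0)"
proof -
  obtain a b c d where p: "p = (a,b,c,d)" by (cases p)
  show ?thesis unfolding p pd_def
    by (cases "k=0"; cases "k=1"; cases "k=2"; cases "j=0"; cases "j=1"; cases "j=2";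
        auto intro!: DERIV_imp_deriv derivative_eq_intros)
qed

lemma pd_coord: "pd k (coord j) p = (if k = j \<or> (k \<ge> 3 \<and> j \<ge> 3) then 1 else 0)"
  using pd_lin[of k 1 j p] by simp

lemma pd_const: "pd k (\<lambda>_. r) p = 0"
  unfolding pd_def by simp

lemma pd_fA:
  "pd 0 (fA R) (a,b,c,d) = (- b * sin a + c * cos a) * exp d"
  "pd 1 (fA R) (a,b,c,d) = cos a * exp d - R"
  "pd 2 (fA R) (a,b,c,d) = sin a * exp d"
  "pd 3 (fA R) (a,b,c,d) = (b * cos a + c * sin a) * exp d"
  unfolding pd0 pd1 pd2 pd3 fA_def
  apply (rule_tac [!] DERIV_imp_deriv) by (auto intro!: derivative_eq_intros simp: algebra_simps)

lemma pd_fB: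
  "pd 0 fB (a,b,c,d) = (b * cos a + c * sin a) * exp d"
  "pd 1 fB (a,b,c,d) = sin a * exp d"
  "pd 2 fB (a,b,c,d) = - cos a * exp d"
  "pd 3 fB (a,b,c,d) = (b * sin a - c * cos a) * exp d"
  unfolding pd0 pd1 pd2 pd3 fB_def
  apply (rule_tac [!] DERIV_imp_deriv) by (auto intro!: derivative_eq_intros simp: algebra_simps)

lemma pd_mfB:
  "pd 0 nfB (a,b,c,d) = - (b * cos a + c * sin a) * exp d"
  "pd 1 nfB (a,b,c,d) = - sin a * exp d"
  "pd 2 nfB (a,b,c,d) = cos a * exp d"
  "pd 3 nfB (a,b,c,d) = - (b * sin a - c * cos a) * exp d"
  unfolding pd0 pd1 pd2 pd3 fB_def nfB_def
  apply (rule_tac [!] DERIV_imp_deriv) by (auto intro!: derivative_eq_intros simp: algebra_simps)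

lemma pd_gA: "pd k gA p = (if k \<ge> 3 then -2 else 0)"
  using pd_lin[of k "-2" 3 p] by (simp add: gA_def[abs_def])
lemma pd_nx2: "pd k nx2 p = (if k = 2 then -1 else 0)"
  using pd_lin[of k "-1" 2 p] by (simp add: nx2_def[abs_def])
lemma pd_gR: "pd k (gR R) p = (if k \<ge> 3 then R else 0)"
  using pd_lin[of k "R" 3 p] by (simp add: gR_def[abs_def])



lemma pd_neg_coord: "pd k (\<lambda>p. - coord j p) p = (if k = j \<or> (k \<ge> 3 \<and> j \<ge> 3) then -1 else 0)"
  using pd_lin[of k "-1" j p] by simp

lemma A_periodic: "periodic_form omegaA"
  by (simp add: periodic_form_def omegaA_eq mk2_def gA_def nx2_def)

lemma A_sd: "self_dual omegaA"
  by (simp add: self_dual_def omegaA_eq hodge_mk2 nx2_def[abs_def])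

lemma A_harm: "harmonic_on S1D3 omegaA"
proof -
  have h: "hodge omegaA = omegaA" using A_sd self_dual_def by simp
  have d: "diff_on S1D3 omegaA" unfolding omegaA_eq
    by (intro diff_mk2 ballI conjI dcoord differentiable_mult differentiable_const differentiable_minus)
      (auto simp: gA_def[abs_def] nx2_def[abs_def] dcoord intro!: differentiable_mult differentiable_minus)
  have c: "closed_on S1D3 omegaA" unfolding omegaA_eq
    by (intro closed_mk2) (simp only: dcoef_mk2, simp add: pd_lin pd_coord pd_gA pd_nx2)
  show ?thesis unfolding harmonic_on_def h using c d by simp
qed

lemma A_van: "vanishes_exactly_on_core omegaA"
  unfolding vanishes_exactly_on_core_def omegaA_eq
proof (intro ballI iffI)
  fix p assume "\<forall>i j. mk2 x1 x2 gA gA nx2 x1 p i j = 0"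
  from this[rule_format, of 0 1] this[rule_format, of 0 2] this[rule_format, of 0 3]
  show "x1 p = 0 \<and> x2 p = 0 \<and> x3 p = 0" by (simp add: mk2_def gA_def)
next
  fix p assume "x1 p = 0 \<and> x2 p = 0 \<and> x3 p = 0"
  then show "\<forall>i j. mk2 x1 x2 gA gA nx2 x1 p i j = 0"
    by (simp add: mk2_def gA_def nx2_def)
qed

lemma A_L: "Lmat omegaA t = vector [vector [1, 0, 0], vector [0, 1, 0], vector [0, 0, -2]]"
  unfolding Lmat_def Lc_def omegaA_eq mk2_fun by (simp add: pd_lin pd_coord pd_gA)

lemma A_nd: "nondegenerate omegaA"
  unfolding nondegenerate_def A_L by (simp add: det_3)

lemma A_mu: "omegaA = fadd (star3 muA) (dtheta_wedge muA)"
proof -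
  have m: "muA k p = pd k (\<lambda>p. (1/2) * ((x1 p)\<^sup>2 + (x2 p)\<^sup>2) - (x3 p)\<^sup>2) p" for k p
    by (simp add: muA_def d3_def)
  have m1: "muA 1 p = x1 p" for p
  proof -
    obtain a b c d where "p = (a,b,c,d)" by (cases p)
    note e = this
    show ?thesis unfolding m e pd1 coord_simps by (rule DERIV_imp_deriv) (auto intro!: derivative_eq_intros)
  qed
  have m2: "muA 2 p = x2 p" for p
  proof -
    obtain a b c d where "p = (a,b,c,d)" by (cases p)
    note e = this
    show ?thesis unfolding m e pd2 coord_simps by (rule DERIV_imp_deriv) (auto intro!: derivative_eq_intros)
  qed
  have m3: "muA 3 p = -2 * x3 p" for p
  proof -
    obtain a b c d where "p = (a,b,c,d)" by (cases p)
    note e = this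
    show ?thesis unfolding m e pd3 coord_simps by (rule DERIV_imp_deriv) (auto intro!: derivative_eq_intros)
  qed
  show ?thesis
    by (auto simp: fun_eq_iff omegaA_eq fadd_def star3_def dtheta_wedge_def mk2_def m1 m2 m3 m1[simplified] gA_def nx2_def)
qed



lemma B_periodic: "periodic_form (omegaB R)"
  by (simp add: periodic_form_def omegaB_eq mk2_def fA_def fB_def gR_def nfB_def)

lemma B_sd: "self_dual (omegaB R)"
  by (simp add: self_dual_def omegaB_eq hodge_mk2 nfB_def[abs_def])

lemma B_harm: "harmonic_on S1D3 (omegaB R)"
proof -
  have h: "hodge (omegaB R) = omegaB R" using B_sd self_dual_def by simp
  have d: "diff_on S1D3 (omegaB R)" unfolding omegaB_eq
    by (intro diff_mk2 ballI conjI diff_fA diff_fB)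
      (auto simp: gR_def[abs_def] nfB_def[abs_def] dcoord diff_fB intro!: differentiable_mult differentiable_minus)
  have c: "closed_on S1D3 (omegaB R)" unfolding omegaB_eq
  proof (intro closed_mk2 ballI)
    fix p :: pt
    obtain a b c d where e: "p = (a,b,c,d)" by (cases p)
    show "dcoef (mk2 (fA R) fB (gR R) (gR R) nfB (fA R)) p 0 1 2 = 0 \<and>
      dcoef (mk2 (fA R) fB (gR R) (gR R) nfB (fA R)) p 0 1 3 = 0 \<and>
      dcoef (mk2 (fA R) fB (gR R) (gR R) nfB (fA R)) p 0 2 3 = 0 \<and>
      dcoef (mk2 (fA R) fB (gR R) (gR R) nfB (fA R)) p 1 2 3 = 0"
      unfolding dcoef_mk2 e pd_fA pd_fB pd_mfB pd_gR by (simp add: algebra_simps)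
  qed
  show ?thesis unfolding harmonic_on_def h using c d by simp
qed

lemma B_L: "Lmat (omegaB R) t = vector [vector [cos t - R, sin t, 0], vector [sin t, - cos t, 0], vector [0, 0, R]]"
  unfolding Lmat_def Lc_def omegaB_eq mk2_fun by (simp add: pd_gR pd_fA pd_fB pd_fA[unfolded One_nat_def] pd_fB[unfolded One_nat_def])

lemma Rcos: fixes t :: real assumes "0 < R" "R < 1" shows "R * cos t < 1"
proof -
  have "R * cos t \<le> R * 1" using assms cos_le_one[of t] by (intro mult_left_mono) auto
  then show ?thesis using assms by linarith
qed

lemma B_nd: assumes "0 < R" "R < 1" shows "nondegenerate (omegaB R)"
  unfolding nondegenerate_def B_L
proof
  fix t
  have r: "R * cos t < 1" using Rcos assms by blast
  have s: "sin t * sin t + cos t * cos t = 1" using sin_cos_squared_add[of t] by (simp add: power2_eq_square)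
  have "det (vector [vector [cos t - R, sin t, 0], vector [sin t, - cos t, 0], vector [0, 0, R]] :: real^3^3)
     = R * (R * cos t - 1)"
  proof -
    have "R * (cos t * cos t) + R * (sin t * sin t) = R" by (metis distrib_left mult.right_neutral s add.commute)
    then show ?thesis by (simp add: det_3 algebra_simps)
  qed
  also have "\<dots> \<noteq> 0" using r assms by simp
  finally show "det (vector [vector [cos t - R, sin t, 0], vector [sin t, - cos t, 0], vector [0, 0, R]] :: real^3^3) \<noteq> 0" .
qed

lemma B_van: assumes "0 < R" "R < 1" shows "vanishes_exactly_on_core (omegaB R)"
  unfolding vanishes_exactly_on_core_def omegaB_eq
proof (intro ballI iffI)
  fix p assume h: "\<forall>i j. mk2 (fA R) fB (gR R) (gR R) nfB (fA R) p i j = 0"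
  obtain t a b c where e: "p = (t,a,b,c)" by (cases p)
  from h[rule_format, of 0 1] h[rule_format, of 0 2] h[rule_format, of 0 3]
  have h1: "(a * cos t + b * sin t) * exp c - R * a = 0" and h2: "(a * sin t - b * cos t) * exp c = 0"
    and h3: "R * c = 0"
    by (simp_all add: mk2_def e fA_def fB_def gR_def)
  have c0: "c = 0" using h3 assms by simp
  have q1: "a * cos t + b * sin t - R * a = 0" and q2: "a * sin t - b * cos t = 0" using h1 h2 c0 by simp_all
  have "cos t * (a * cos t + b * sin t - R * a) + sin t * (a * sin t - b * cos t) = 0"
    using q1 q2 by simp
  have s: "sin t * sin t + cos t * cos t = 1" using sin_cos_squared_add[of t] by (simp add: power2_eq_square)
  have "cos t * (a * cos t + b * sin t - R * a) + sin t * (a * sin t - b * cos t) = a * (sin t * sin t + cos t * cos t) - R * cos t * a"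
    by (simp only: algebra_simps)
  then have "a * (sin t * sin t + cos t * cos t) - R * cos t * a = 0" using q1 q2 by simp
  then have "a * (1 - R * cos t) = 0" unfolding s by (simp add: algebra_simps)
  moreover have "1 - R * cos t \<noteq> 0" using Rcos[OF assms, of t] by simp
  ultimately have a0: "a = 0" by simp
  have bs: "b * sin t = 0" and bc: "b * cos t = 0" using q1 q2 a0 by simp_all
  have "b = b * (sin t * sin t + cos t * cos t)" by (simp only: s mult_1_right)
  also have "\<dots> = (b * sin t) * sin t + (b * cos t) * cos t" by (simp only: algebra_simps)
  finally have b0: "b = 0" using bs bc by simp
  show "x1 p = 0 \<and> x2 p = 0 \<and> x3 p = 0" using a0 b0 c0 e by simp
next
  fix p assume "x1 p = 0 \<and> x2 p = 0 \<and> x3 p = 0"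
  then show "\<forall>i j. mk2 (fA R) fB (gR R) (gR R) nfB (fA R) p i j = 0"
    by (simp add: mk2_def fA_def fB_def gR_def nfB_def)
qed



lemma mv3: "(vector [vector [a,b,c], vector [d,e,f], vector [g,h,i]] :: real^3^3) *v v =
   vector [a * v$1 + b * v$2 + c * v$3, d * v$1 + e * v$2 + f * v$3, g * v$1 + h * v$2 + i * v$3]"
  by (simp add: vec_eq_iff forall_3 matrix_vector_mult_def sum_3)

lemma vec3_eq: "(v :: real^3) = w \<longleftrightarrow> v$1 = w$1 \<and> v$2 = w$2 \<and> v$3 = w$3"
  by (simp add: vec_eq_iff forall_3)

lemma indep2: fixes u w :: "real^3"
  assumes "u$k = 0" "u \<noteq> 0" "w$k \<noteq> 0"
  shows "independent {w,u}"
proof -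
  have "w \<notin> span {u}"
  proof
    assume "w \<in> span {u}"
    then obtain r where "w = r *\<^sub>R u" by (auto simp: span_singleton)
    then show False using assms by simp
  qed
  moreover have "independent {u}" using assms(2) by (simp add: independent_insert)
  ultimately show ?thesis using assms by (simp add: independent_insert)
qed

lemma dim_ne1: fixes u w :: "real^3"
  assumes "u \<in> span S" "w \<in> span S" "u$k = 0" "u \<noteq> 0" "w$k \<noteq> 0"
  shows "dim (span S) \<noteq> 1"
proof -
  have "card {w,u} \<le> dim (span S)"
    using independent_card_le_dim[of "{w,u}" "span S"] indep2[OF assms(3-5)] assms(1,2) by simp
  moreover have "w \<noteq> u" using assms by auto
  ultimately show ?thesis by simp
qed

lemma pos_mem: "M *v v = l *\<^sub>R v \<Longrightarrow> l > 0 \<Longrightarrow> v \<in> pos_space M"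
  unfolding pos_space_def by (rule span_base) auto

lemma neg_mem: "M *v v = l *\<^sub>R v \<Longrightarrow> l < 0 \<Longrightarrow> v \<in> neg_space M"
  unfolding neg_space_def by (rule span_base) auto

lemma A_oriented: "oriented_splitting omegaA"
proof -
  let ?M = "vector [vector [1, 0, 0], vector [0, 1, 0], vector [0, 0, -2]] :: real^3^3"
  have "dim (pos_space ?M) \<noteq> 1" unfolding pos_space_def
    by (rule dim_ne1[where u = "vector [0,1,0]" and w = "vector [1,0,0]" and k = 1])
      (auto simp: vec3_eq mv3 intro!: span_base exI[where x=1])
  then have o: "once_line ?M = neg_space ?M" by (simp add: once_line_def)
  have "vector [0,0,1] \<in> neg_space ?M"
    by (rule neg_mem[where l = "-2"]) (auto simp: vec3_eq mv3)
  then show ?thesis unfolding oriented_splitting_def A_L o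
    by (intro exI[where x = "\<lambda>_. vector [0,0,1]"]) (auto simp: vec3_eq)
qed



definition MB :: "real \<Rightarrow> real \<Rightarrow> real^3^3" where
  "MB R t = vector [vector [cos t - R, sin t, 0], vector [sin t, - cos t, 0], vector [0, 0, R]]"

definition DD :: "real \<Rightarrow> real \<Rightarrow> real" where "DD R t = sqrt (R\<^sup>2 + 4 - 4 * R * cos t)"

lemma DD_facts: assumes "0 < R" "R < 1"
  shows "(DD R t)\<^sup>2 = R\<^sup>2 + 4 - 4 * R * cos t" "DD R t > R"
proof -
  have r: "R * cos t < 1" using Rcos assms by blast
  have p: "R\<^sup>2 + 4 - 4 * R * cos t > R\<^sup>2" using r by linarith
  have nn: "0 \<le> R\<^sup>2 + 4 - 4 * R * cos t" using p zero_le_power2[of R] by linarith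
  then show "(DD R t)\<^sup>2 = R\<^sup>2 + 4 - 4 * R * cos t" unfolding DD_def
    by (simp only: real_sqrt_pow2)
  have "R = sqrt (R\<^sup>2)" using assms by simp
  also have "\<dots> < DD R t" unfolding DD_def using p by (intro real_sqrt_less_mono) 
  finally show "DD R t > R" .
qed

lemma sc1: fixes t :: real shows "sin t * sin t + cos t * cos t = 1"
  using sin_cos_squared_add[of t] by (simp add: power2_eq_square)

lemma B_once: assumes "0 < R" "R < 1" shows "once_line (MB R t) = neg_space (MB R t)"
proof -
  define l where "l = (DD R t - R) / 2"
  define c where "c = cos t"
  define s where "s = sin t"
  have l0: "l > 0" using DD_facts[OF assms, of t] by (simp add: l_def)
  have "2 * l + R = DD R t" unfolding l_def by (simp add: field_simps)
  then have "(2 * l + R)\<^sup>2 = R\<^sup>2 + 4 - 4 * R * c" using DD_facts[OF assms, of t] by (simp add: c_def)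
  then have ch: "l * l + R * l + R * c - 1 = 0" by (simp add: power2_eq_square algebra_simps)
  have scs: "s * s + c * c = 1" using sc1 by (simp add: s_def c_def)
  have "\<exists>u :: real^3. u$3 = 0 \<and> u \<noteq> 0 \<and> MB R t *v u = l *\<^sub>R u"
  proof (cases "c + l = 0 \<and> s = 0")
    case True
    define u :: "real^3" where "u = vector [s, l - c + R, 0]"
    have "l - c + R \<noteq> 0"
    proof
      assume "l - c + R = 0"
      then have "c = R / 2" using True by simp
      moreover have "c * c = 1" using True scs by simp
      ultimately show False using assms by (simp add: power2_eq_square) (smt (verit) mult_less_cancel_right1)
    qed
    then have "u \<noteq> 0" by (simp add: u_def vec3_eq)
    moreover have "MB R t *v u = l *\<^sub>R u"
      unfolding MB_def mv3 u_def vec3_eq using ch scs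
      by (simp add: c_def[symmetric] s_def[symmetric] algebra_simps)
    ultimately show ?thesis by (intro exI[where x=u]) (simp add: u_def)
  next
    case False
    define u :: "real^3" where "u = vector [c + l, s, 0]"
    have "u \<noteq> 0" using False by (auto simp: u_def vec3_eq)
    moreover have "MB R t *v u = l *\<^sub>R u"
      unfolding MB_def mv3 u_def vec3_eq using ch scs
      by (simp add: c_def[symmetric] s_def[symmetric] algebra_simps)
    ultimately show ?thesis by (intro exI[where x=u]) (simp add: u_def)
  qed
  then obtain u :: "real^3" where u: "u$3 = 0" "u \<noteq> 0" "MB R t *v u = l *\<^sub>R u" by blast
  have e3: "MB R t *v vector [0,0,1] = R *\<^sub>R vector [0,0,1]" by (simp add: MB_def mv3 vec3_eq)
  have "dim (pos_space (MB R t)) \<noteq> 1" unfolding pos_space_def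
    apply (rule dim_ne1[where u = u and w = "vector [0,0,1]" and k = 3])
    using u l0 assms e3 by (auto intro!: pos_mem[unfolded pos_space_def])
  then show ?thesis by (simp add: once_line_def)
qed



definition mu :: "real \<Rightarrow> real \<Rightarrow> real" where "mu R t = - (R + DD R t) / 2"

lemma mu_neg: assumes "0 < R" "R < 1" shows "mu R t < 0"
  using DD_facts[OF assms, of t] assms by (simp add: mu_def)

lemma eig_sub: "subspace {v. M *v v = (m::real) *\<^sub>R (v::real^'n)}"
  unfolding subspace_def
  apply (intro conjI ballI allI)
  apply simp
  apply (simp add: matrix_vector_right_distrib scaleR_add_right)
  apply (simp add: matrix_vector_mult_scaleR)
  done

lemma neg_eig: assumes "0 < R" "R < 1" "MB R t *v v = l *\<^sub>R v" "l < 0" "v \<noteq> 0"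
  shows "l = mu R t"
proof -
  define c where "c = cos t"
  define s where "s = sin t"
  have scs: "s * s + c * c = 1" using sc1 by (simp add: s_def c_def)
  have E: "(c - R) * v$1 + s * v$2 = l * v$1" "s * v$1 - c * v$2 = l * v$2" "R * v$3 = l * v$3"
    using assms(3) unfolding MB_def mv3 vec3_eq by (simp_all add: c_def s_def)
  have "(R - l) * v$3 = 0" using E(3) by (simp add: algebra_simps)
  then have v3: "v$3 = 0" using assms(1,4) by simp
  have v12: "v$1 \<noteq> 0 \<or> v$2 \<noteq> 0" using assms(5) v3 by (auto simp: vec3_eq)
  define Dl where "Dl = l * l + R * l + R * c - s * s - c * c"
  have E1: "(c - R - l) * v$1 + s * v$2 = 0" and E2: "s * v$1 - (c + l) * v$2 = 0"
    using E by (simp_all add: algebra_simps)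
  have "Dl * v$1 = -(c+l) * ((c - R - l) * v$1 + s * v$2) - s * (s * v$1 - (c + l) * v$2)"
    unfolding Dl_def by (simp add: algebra_simps)
  then have d1: "Dl * v$1 = 0" using E1 E2 by simp
  have "Dl * v$2 = - (s * ((c - R - l) * v$1 + s * v$2) - (c - R - l) * (s * v$1 - (c + l) * v$2))"
    unfolding Dl_def by (simp add: algebra_simps)
  then have d2: "Dl * v$2 = 0" using E1 E2 by simp
  have "Dl = 0" using d1 d2 v12 by auto
  then have "l * l + R * l + R * c - 1 = 0" using scs unfolding Dl_def by linarith
  then have "(2 * l + R)\<^sup>2 = R\<^sup>2 + 4 - 4 * R * c"
    by (simp add: power2_eq_square algebra_simps)
  then have "(2 * l + R)\<^sup>2 = (DD R t)\<^sup>2" using DD_facts[OF assms(1,2), of t] by (simp add: c_def)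
  then have "2 * l + R = DD R t \<or> 2 * l + R = - DD R t" by (simp add: power2_eq_iff)
  moreover have "2 * l + R \<noteq> DD R t" using DD_facts[OF assms(1,2), of t] assms(4) by linarith
  ultimately have "2 * l + R = - DD R t" by blast
  then show ?thesis unfolding mu_def by (simp add: field_simps)
qed

lemma B_neg: assumes "0 < R" "R < 1"
  shows "neg_space (MB R t) \<subseteq> {v. MB R t *v v = mu R t *\<^sub>R v}"
  unfolding neg_space_def
proof (rule span_minimal[OF _ eig_sub], rule subsetI)
  fix v assume "v \<in> {v. \<exists>l<0. MB R t *v v = l *\<^sub>R v}"
  then obtain l where l: "l < 0" "MB R t *v v = l *\<^sub>R v" by blast
  show "v \<in> {v. MB R t *v v = mu R t *\<^sub>R v}"
  proof (cases "v = 0")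
    case True then show ?thesis by simp
  next
    case False then show ?thesis using neg_eig[OF assms l(2) l(1) False] l by simp
  qed
qed



lemma W_not_nonpos:
  fixes c s R m v1 v2 :: real
  assumes scs: "s * s + c * c = 1" and R: "0 < R" "R < 1" and m: "m < 0"
    and e1: "(c - R) * v1 + s * v2 = m * v1" and e2: "s * v1 - c * v2 = m * v2"
    and nz: "v1 \<noteq> 0 \<or> v2 \<noteq> 0"
    and im: "c * (2 * v1 * v2) - s * (v1 * v1 - v2 * v2) = 0"
  shows "c * (v1 * v1 - v2 * v2) + s * (2 * v1 * v2) < 0"
proof -
  define A where "A = v1 * v1 - v2 * v2"
  define B where "B = 2 * v1 * v2"
  define N where "N = v1 * v1 + v2 * v2"
  define X where "X = c * A + s * B"
  have N0: "N > 0" using nz unfolding N_def by (metis add_pos_nonneg add_nonneg_pos not_real_square_gt_zero zero_le_square)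
  have imB: "c * B - s * A = 0" using im by (simp add: A_def B_def)
  have "X * X + (c * B - s * A) * (c * B - s * A) = (s * s + c * c) * (A * A + B * B)"
    unfolding X_def by (simp add: algebra_simps)
  also have "\<dots> = N * N" using scs unfolding A_def B_def N_def by (simp add: algebra_simps)
  finally have XN: "X * X = N * N" using imB by simp
  have "X = v1 * ((c - R) * v1 + s * v2) + v2 * (s * v1 - c * v2) + R * (v1 * v1)"
    unfolding X_def A_def B_def by (simp add: algebra_simps)
  also have "\<dots> = m * N + R * (v1 * v1)" using e1 e2 unfolding N_def by (simp add: algebra_simps)
  finally have XmN: "X = m * N + R * (v1 * v1)" .
  have "R * (v1 * v1) \<le> 1 * (v1 * v1)" using R by (intro mult_right_mono) auto
  also have "\<dots> = v1 * v1" by simp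
  also have "\<dots> \<le> N" unfolding N_def by simp
  finally have "R * (v1 * v1) \<le> N" .
  moreover have "m * N < 0" using m N0 by (simp add: mult_neg_pos)
  ultimately have "X < N" using XmN by linarith
  moreover have "X = N \<or> X = - N" using XN by (metis square_eq_iff)
  ultimately have "X = - N" by auto
  then show ?thesis using N0 unfolding X_def A_def B_def by simp
qed



lemma no_section:
  fixes v :: "real \<Rightarrow> real^3"
  assumes R: "0 < R" "R < 1" and cont: "continuous_on UNIV v"
    and per: "\<And>t. v (t + 2 * pi) = v t"
    and nz: "\<And>t. v t \<noteq> 0" and eig: "\<And>t. MB R t *v v t = mu R t *\<^sub>R v t"
  shows False
proof -
  define z where "z t = complex_of_real (v t $ 1) + \<i> * complex_of_real (v t $ 2)" for t
  define W where "W t = exp (- (\<i> * complex_of_real t)) * (z t)\<^sup>2" for t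
  define E where "E t = exp (\<i> * complex_of_real (t / 2))" for t
  define sg where "sg t = csqrt (- W t)" for t
  define rho where "rho t = z t / (E t * sg t)" for t
  have comp: "(cos t - R) * v t $ 1 + sin t * v t $ 2 = mu R t * v t $ 1"
     "sin t * v t $ 1 - cos t * v t $ 2 = mu R t * v t $ 2"
     "R * v t $ 3 = mu R t * v t $ 3" for t
    using eig[of t] unfolding MB_def mv3 vec3_eq by simp_all
  have v3: "v t $ 3 = 0" for t
  proof -
    have "(R - mu R t) * v t $ 3 = 0" using comp(3)[of t] by (simp add: algebra_simps)
    then show ?thesis using mu_neg[OF R, of t] R by simp
  qed
  have v12: "v t $ 1 \<noteq> 0 \<or> v t $ 2 \<noteq> 0" for t using nz[of t] v3[of t] by (auto simp: vec3_eq)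
  have znz: "z t \<noteq> 0" for t
  proof
    assume "z t = 0"
    then have "Re (z t) = 0" "Im (z t) = 0" by simp_all
    then show False using v12[of t] by (simp add: z_def)
  qed
  have ReW: "Re (W t) = cos t * (v t $ 1 * v t $ 1 - v t $ 2 * v t $ 2) + sin t * (2 * v t $ 1 * v t $ 2)"
   and ImW: "Im (W t) = cos t * (2 * v t $ 1 * v t $ 2) - sin t * (v t $ 1 * v t $ 1 - v t $ 2 * v t $ 2)" for t
    unfolding W_def z_def by (simp_all add: power2_eq_square Re_exp Im_exp algebra_simps)
  have Wok: "- W t \<notin> \<real>\<^sub>\<le>\<^sub>0" for t
  proof
    assume "- W t \<in> \<real>\<^sub>\<le>\<^sub>0"
    then have a: "Im (W t) = 0" "Re (W t) \<ge> 0" by (auto simp: complex_nonpos_Reals_iff)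
    have "Re (W t) < 0" unfolding ReW
      by (rule W_not_nonpos[OF sc1 R mu_neg[OF R] comp(1) comp(2) v12]) (use a ImW in simp)
    then show False using a by simp
  qed
  have contz: "continuous_on UNIV z" unfolding z_def
    by (intro continuous_intros continuous_on_component cont)
  have contW: "continuous_on UNIV W" unfolding W_def
    by (intro continuous_intros contz)
  have contsg: "continuous_on UNIV sg" unfolding sg_def
    by (rule continuous_on_compose2[OF continuous_on_csqrt, of UNIV "\<lambda>t. - W t"])
       (use Wok in \<open>auto intro!: continuous_intros contW\<close>)
  have Wnz: "W t \<noteq> 0" for t using znz by (simp add: W_def)
  have sg2: "(sg t)\<^sup>2 = - W t" for t by (simp add: sg_def)
  have sgnz: "sg t \<noteq> 0" for t using sg2[of t] Wnz[of t] by auto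
  have Enz: "E t \<noteq> 0" for t by (simp add: E_def)
  have E2: "(E t)\<^sup>2 * W t = (z t)\<^sup>2" for t
  proof -
    have "(E t)\<^sup>2 = exp (\<i> * complex_of_real t)" unfolding E_def
      by (simp add: power2_eq_square exp_add[symmetric] field_simps)
    then show ?thesis unfolding W_def by (simp add: mult.assoc[symmetric] exp_add[symmetric])
  qed
  have contE: "continuous_on UNIV E" unfolding E_def
    by (intro continuous_intros) auto
  have contrho: "continuous_on UNIV rho" unfolding rho_def
    by (intro continuous_intros contz contsg contE) (auto simp: Enz sgnz)
  have zr: "z t = rho t * E t * sg t" for t
    using Enz[of t] sgnz[of t] by (simp add: rho_def)
  have rho2: "(rho t)\<^sup>2 = -1" for t
  proof -
    have "(z t)\<^sup>2 = (rho t)\<^sup>2 * ((E t)\<^sup>2 * (sg t)\<^sup>2)" unfolding zr[of t] by (simp add: power_mult_distrib)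
    also have "\<dots> = (rho t)\<^sup>2 * (- (z t)\<^sup>2)" unfolding sg2 using E2[of t] by simp
    finally have "(z t)\<^sup>2 * ((rho t)\<^sup>2 + 1) = 0" by (simp add: algebra_simps) (metis add.inverse_inverse add.right_inverse neg_eq_iff_add_eq_0)
    then have "(rho t)\<^sup>2 + 1 = 0" using znz[of t] by simp
    then show ?thesis by (metis add.commute add_eq_0_iff)
  qed
  have rhoi: "rho t = \<i> \<or> rho t = - \<i>" for t
  proof -
    have "(rho t - \<i>) * (rho t + \<i>) = 0" using rho2[of t] by (simp add: algebra_simps power2_eq_square)
    then have "rho t - \<i> = 0 \<or> rho t + \<i> = 0" by simp
    then show ?thesis by (simp only: eq_neg_iff_add_eq_0 right_minus_eq)
  qed
  have rho_eq: "rho (2 * pi) = rho 0"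
  proof (rule ccontr)
    assume ne: "rho (2 * pi) \<noteq> rho 0"
    have ci: "continuous_on {0..2*pi} (\<lambda>t. Im (rho t))"
      by (intro continuous_intros continuous_on_subset[OF contrho]) auto
    have cm: "continuous_on {0..2*pi} (\<lambda>t. - Im (rho t))"
      by (intro continuous_intros continuous_on_subset[OF contrho]) auto
    have "\<exists>x. 0 \<le> x \<and> x \<le> 2 * pi \<and> Im (rho x) = 0"
    proof (cases "rho 0 = \<i>")
      case True
      then have "rho (2 * pi) = - \<i>" using ne rhoi by metis
      then obtain x where "0 \<le> x" "x \<le> 2 * pi" "- Im (rho x) = 0"
        using IVT'[of "\<lambda>t. - Im (rho t)" 0 0 "2 * pi"] True cm by auto
      then show ?thesis by auto
    next
      case False
      then have "rho 0 = - \<i>" "rho (2 * pi) = \<i>" using ne rhoi by metis+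
      then show ?thesis using IVT'[of "\<lambda>t. Im (rho t)" 0 0 "2 * pi"] ci by auto
    qed
    then obtain x where "Im (rho x) = 0" by blast
    then show False using rhoi[of x] by auto
  qed
  have W_eq: "W (2 * pi) = W 0"
  proof -
    have "z (2 * pi) = z 0" unfolding z_def using per[of 0] by simp
    moreover have "exp (- (\<i> * complex_of_real (2 * pi))) = 1"
      by (simp add: exp_minus exp_two_pi_i' mult.commute)
    ultimately show ?thesis unfolding W_def by simp
  qed
  have E0: "E 0 = 1" by (simp add: E_def)
  have E2pi: "E (2 * pi) = -1" by (simp add: E_def exp_pi_i')
  have "z 0 = z (2 * pi)" unfolding z_def using per[of 0] by simp
  also have "\<dots> = rho 0 * (-1) * sg 0" using zr[of "2 * pi"] rho_eq E2pi W_eq by (simp add: sg_def)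
  also have "\<dots> = - z 0" using zr[of 0] E0 by simp
  finally have "z 0 = 0" by simp
  then show False using znz by blast
qed



lemma B_not_oriented: assumes "0 < R" "R < 1" shows "\<not> oriented_splitting (omegaB R)"
proof
  assume "oriented_splitting (omegaB R)"
  then obtain v :: "real \<Rightarrow> real^3" where c: "continuous_on UNIV v" and p: "\<forall>t. v (t + 2 * pi) = v t"
    and h: "\<forall>t. v t \<noteq> 0 \<and> v t \<in> once_line (Lmat (omegaB R) t)"
    unfolding oriented_splitting_def by blast
  have "MB R t *v v t = mu R t *\<^sub>R v t" for t
  proof -
    have "v t \<in> neg_space (MB R t)" using h B_once[OF assms, of t] by (simp add: B_L MB_def[symmetric]) (metis)
    then show ?thesis using B_neg[OF assms, of t] by blast
  qed
  then show False using no_section[OF assms c] p h by blast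
qed

theorem mainTheorem5:
  shows "omegaA = fadd (star3 muA) (dtheta_wedge muA)
       \<and> sd_harmonic omegaA \<and> vanishes_exactly_on_core omegaA \<and> nondegenerate omegaA
       \<and> (\<forall>t. Lmat omegaA t = vector [vector [1, 0, 0], vector [0, 1, 0], vector [0, 0, -2]])
       \<and> oriented_splitting omegaA
       \<and> (\<forall>R::real. 0 < R \<and> R < 1 \<longrightarrow>
            sd_harmonic (omegaB R) \<and> vanishes_exactly_on_core (omegaB R)
          \<and> nondegenerate (omegaB R)
          \<and> (\<forall>t. Lmat (omegaB R) t = vector [vector [cos t - R, sin t, 0],
                                              vector [sin t, - cos t, 0],
                                              vector [0, 0, R]])
          \<and> \<not> oriented_splitting (omegaB R))"
  using A_mu A_periodic A_sd A_harm A_van A_nd A_L A_oriented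
    B_periodic B_sd B_harm B_van B_nd B_L B_not_oriented
  by (simp add: sd_harmonic_def)

end
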